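(* Assume $G$ is strongly connected, $r=1$ (neutral drift), and $C\subseteq V$ with $F_C>0$. Let $P_{\min,t}=\min_{i\in V}P_{i,t|C}$. Then $$\frac{1}{F_C}\sum_{t=1}^{\infty}t\,\big(P_{\min,t}-P_{\min,t-1}\big)\;\le\;\frac{1}{F_C}\sum_{t=1}^{\infty}t\,\big(F_{t|C}-F_{t-1|C}\big)=t_C .$$
   Context: Let $G=(V,E)$ be a finite directed graph with $N=|V|$ vertices and weight matrix $W=[w_{ij}]$, $w_{ij}>0$ iff $(i,j)\in E$, $\sum_j w_{ij}=1$ for all $i$. A configuration is a set of mutants. In the neutral-drift birth–death process started from configuration $C$ at time $0$, at each step a vertex $i$ is selected uniformly at random, then $j$ is chosen with probability $w_{ij}$ and $j$ takes the type of $i$. $P_{i,t|C}$ is the probability that $i$ is a mutant at time $t$. $F_{t|C}$ is the probability that all vertices are mutants at time $t$ (fixation has occurred by time $t$), $F_C=\lim_{t\to\infty}F_{t|C}$ is the fixation probability, and $t_C=\frac{1}{F_C}\sum_{t\ge1}t(F_{t|C}-F_{t-1|C})$ is the mean time to fixation conditioned on fixation. *)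

theory Defs
  imports Complex_Main
begin

text \<open>Vertices: a finite type 'v (V = UNIV, N = CARD('v)). Weight matrix W :: 'v => 'v => real.
Configurations: sets of mutant vertices.\<close>

definition weight_matrix :: "('v::finite \<Rightarrow> 'v \<Rightarrow> real) \<Rightarrow> bool" where
  "weight_matrix W \<longleftrightarrow> (\<forall>i j. W i j \<ge> 0) \<and> (\<forall>i. (\<Sum>j\<in>UNIV. W i j) = 1)"

definition edges_of :: "('v \<Rightarrow> 'v \<Rightarrow> real) \<Rightarrow> ('v \<times> 'v) set" where
  "edges_of W = {(i, j). W i j > 0}"

definition strongly_connected :: "('v \<Rightarrow> 'v \<Rightarrow> real) \<Rightarrow> bool" where
  "strongly_connected W \<longleftrightarrow> (\<forall>i j. (i, j) \<in> (edges_of W)\<^sup>*)"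

text \<open>Birth-death update: i reproduces onto j (neutral drift, r = 1).\<close>
definition bd_update :: "'v set \<Rightarrow> 'v \<Rightarrow> 'v \<Rightarrow> 'v set" where
  "bd_update S i j = (if i \<in> S then insert j S else S - {j})"

definition trans_prob :: "('v::finite \<Rightarrow> 'v \<Rightarrow> real) \<Rightarrow> 'v set \<Rightarrow> 'v set \<Rightarrow> real" where
  "trans_prob W S S' =
     (\<Sum>i\<in>UNIV. \<Sum>j\<in>UNIV. (1 / real (card (UNIV :: 'v set))) * W i j * (if bd_update S i j = S' then 1 else 0))"

fun config_dist :: "('v::finite \<Rightarrow> 'v \<Rightarrow> real) \<Rightarrow> 'v set \<Rightarrow> nat \<Rightarrow> 'v set \<Rightarrow> real" where
  "config_dist W C 0 S = (if S = C then 1 else 0)"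
| "config_dist W C (Suc t) S = (\<Sum>S0\<in>UNIV. config_dist W C t S0 * trans_prob W S0 S)"

definition mutant_prob :: "('v::finite \<Rightarrow> 'v \<Rightarrow> real) \<Rightarrow> 'v set \<Rightarrow> 'v \<Rightarrow> nat \<Rightarrow> real" where
  "mutant_prob W C i t = (\<Sum>S\<in>UNIV. if i \<in> S then config_dist W C t S else 0)"

definition min_mutant_prob :: "('v::finite \<Rightarrow> 'v \<Rightarrow> real) \<Rightarrow> 'v set \<Rightarrow> nat \<Rightarrow> real" where
  "min_mutant_prob W C t = Min ((\<lambda>i. mutant_prob W C i t) ` UNIV)"

definition fix_by :: "('v::finite \<Rightarrow> 'v \<Rightarrow> real) \<Rightarrow> 'v set \<Rightarrow> nat \<Rightarrow> real" where
  "fix_by W C t = config_dist W C t UNIV"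

definition fix_prob :: "('v::finite \<Rightarrow> 'v \<Rightarrow> real) \<Rightarrow> 'v set \<Rightarrow> real" where
  "fix_prob W C = lim (fix_by W C)"

text \<open>t_C = (1/F_C) * sum_{t>=1} t (F_t - F_{t-1}); the index n stands for t = n+1.\<close>
definition fix_time :: "('v::finite \<Rightarrow> 'v \<Rightarrow> real) \<Rightarrow> 'v set \<Rightarrow> real" where
  "fix_time W C = (1 / fix_prob W C) *
     (\<Sum>n. real (Suc n) * (fix_by W C (Suc n) - fix_by W C n))"

end

theory Submission imports Defs begin


lemma summable_n_pow:
  fixes r :: real assumes "0 \<le> r" "r < 1"
  shows "summable (\<lambda>n. real (Suc n) * r ^ n)"
proof -
  define s where "s = sqrt r"
  have s0: "0 \<le> s" and s1: "s < 1" using assms by (auto simp: s_def)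
  have rs: "r ^ n = s ^ n * s ^ n" for n
    using assms by (simp add: s_def power_mult_distrib[symmetric])
  have "(\<lambda>n. of_nat n * s ^ n) \<longlonglongrightarrow> 0"
    using powser_times_n_limit_0[of s] s0 s1 by simp
  moreover have "(\<lambda>n. s ^ n) \<longlonglongrightarrow> 0" using s0 s1 by (simp add: LIMSEQ_power_zero)
  ultimately have "(\<lambda>n. of_nat n * s ^ n + s ^ n) \<longlonglongrightarrow> 0"
    using tendsto_add by fastforce
  then have "Bseq (\<lambda>n. real (Suc n) * s ^ n)"
    by (intro convergent_imp_Bseq convergentI) (simp add: algebra_simps)
  then obtain B where B: "\<And>n. norm (real (Suc n) * s ^ n) \<le> B"
    by (auto simp: Bseq_def)
  show ?thesis
  proof (rule summable_comparison_test[OF _ summable_mult[OF summable_geometric[of s], of B]])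
    show "norm s < 1" using s0 s1 by simp
    show "\<exists>N. \<forall>n\<ge>N. norm (real (Suc n) * r ^ n) \<le> B * s ^ n"
    proof (intro exI allI impI)
      fix n
      have "norm (real (Suc n) * r ^ n) = norm (real (Suc n) * s ^ n) * s ^ n"
        using s0 by (simp add: rs abs_mult)
      also have "\<dots> \<le> B * s ^ n" using B[of n] s0 by (intro mult_right_mono) auto
      finally show "norm (real (Suc n) * r ^ n) \<le> B * s ^ n" .
    qed
  qed
qed



lemma T_nonneg: "weight_matrix W \<Longrightarrow> trans_prob W S S' \<ge> 0"
  unfolding trans_prob_def weight_matrix_def
  by (intro sum_nonneg) auto

lemma WW_sum:
  fixes W :: "'v::finite \<Rightarrow> 'v \<Rightarrow> real"
  assumes "weight_matrix W" shows "(\<Sum>i\<in>UNIV. \<Sum>j\<in>UNIV. W i j / real (card (UNIV :: 'v set))) = 1"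
  using assms by (simp add: weight_matrix_def sum_divide_distrib[symmetric])

lemma T_sum:
  fixes W :: "'v::finite \<Rightarrow> 'v \<Rightarrow> real"
  assumes "weight_matrix W" shows "(\<Sum>S'\<in>UNIV. trans_prob W S S') = 1"
proof -
  define g where "g = (\<lambda>i j S'. (1 / real (card (UNIV :: 'v set))) * W i j * (if bd_update S i j = S' then 1 else 0))"
  have "(\<Sum>S'\<in>UNIV. trans_prob W S S') = (\<Sum>S'\<in>UNIV. \<Sum>i\<in>UNIV. \<Sum>j\<in>UNIV. g i j S')"
    unfolding trans_prob_def g_def by simp
  also have "\<dots> = (\<Sum>i\<in>UNIV. \<Sum>S'\<in>UNIV. \<Sum>j\<in>UNIV. g i j S')" by (rule sum.swap)
  also have "\<dots> = (\<Sum>i\<in>UNIV. \<Sum>j\<in>UNIV. \<Sum>S'\<in>UNIV. g i j S')"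
    by (rule sum.cong[OF refl], rule sum.swap)
  also have "\<dots> = (\<Sum>i\<in>UNIV. \<Sum>j\<in>UNIV. (1 / real (card (UNIV :: 'v set))) * W i j)"
    unfolding g_def by (simp add: if_distrib cong: if_cong)
  also have "\<dots> = 1" using WW_sum[OF assms] by simp
  finally show ?thesis .
qed

lemma T_le1: "weight_matrix W \<Longrightarrow> trans_prob W S S' \<le> 1"
  using member_le_sum[of S' UNIV "trans_prob W S"] T_sum[of W S] T_nonneg[of W S] by auto

lemma T_ge:
  fixes W :: "'v::finite \<Rightarrow> 'v \<Rightarrow> real"
  assumes "weight_matrix W"
  shows "trans_prob W S (bd_update S i j) \<ge> W i j / real (card (UNIV :: 'v set))"
proof -
  let ?f = "\<lambda>i j. (1 / real (card (UNIV :: 'v set))) * W i j * (if bd_update S i j = bd_update S i j then 1 else 0)"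
  let ?g = "\<lambda>i' j'. (1 / real (card (UNIV :: 'v set))) * W i' j' * (if bd_update S i' j' = bd_update S i j then 1 else 0)"
  have nn: "\<And>i' j'. ?g i' j' \<ge> 0" using assms by (auto simp: weight_matrix_def)
  have "?g i j \<le> (\<Sum>j'\<in>UNIV. ?g i j')" by (rule member_le_sum) (use nn in auto)
  also have "\<dots> \<le> (\<Sum>i'\<in>UNIV. \<Sum>j'\<in>UNIV. ?g i' j')"
    by (rule member_le_sum[where f = "\<lambda>i'. \<Sum>j'\<in>UNIV. ?g i' j'"]) (use nn in \<open>auto intro: sum_nonneg\<close>)
  finally show ?thesis unfolding trans_prob_def by simp
qed

lemma ind_mult: "(if P then 1 else 0) * (x::real) = (if P then x else 0)" by simp

lemma T_UNIV: "weight_matrix W \<Longrightarrow> trans_prob W UNIV S' = (if S' = UNIV then 1 else 0)"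
  using WW_sum[of W] by (auto simp: trans_prob_def bd_update_def)

lemma T_empty: "weight_matrix W \<Longrightarrow> trans_prob W {} S' = (if S' = {} then 1 else 0)"
  using WW_sum[of W] by (auto simp: trans_prob_def bd_update_def)

lemma cd_nonneg: "weight_matrix W \<Longrightarrow> config_dist W C n S \<ge> 0"
  by (induction n arbitrary: S) (auto intro!: sum_nonneg mult_nonneg_nonneg T_nonneg)

lemma cd_sum: "weight_matrix W \<Longrightarrow> (\<Sum>S\<in>UNIV. config_dist W C n S) = 1"
proof (induction n)
  case 0 then show ?case by simp
next
  case (Suc n)
  have "(\<Sum>S\<in>UNIV. config_dist W C (Suc n) S) = (\<Sum>S\<in>UNIV. \<Sum>S0\<in>UNIV. config_dist W C n S0 * trans_prob W S0 S)"
    by simp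
  also have "\<dots> = (\<Sum>S0\<in>UNIV. \<Sum>S\<in>UNIV. config_dist W C n S0 * trans_prob W S0 S)"
    by (rule sum.swap)
  also have "\<dots> = (\<Sum>S0\<in>UNIV. config_dist W C n S0 * (\<Sum>S\<in>UNIV. trans_prob W S0 S))"
    by (simp add: sum_distrib_left)
  also have "\<dots> = 1" using Suc by (simp add: T_sum)
  finally show ?case .
qed

lemma cd_CK: "config_dist W C (n + m) S = (\<Sum>S0\<in>UNIV. config_dist W C n S0 * config_dist W S0 m S)"
proof (induction m arbitrary: S)
  case 0 then show ?case by (simp add: if_distrib cong: if_cong)
next
  case (Suc m)
  have "config_dist W C (n + Suc m) S = (\<Sum>S1\<in>UNIV. config_dist W C (n+m) S1 * trans_prob W S1 S)"
    by simp
  also have "\<dots> = (\<Sum>S1\<in>UNIV. \<Sum>S0\<in>UNIV. config_dist W C n S0 * config_dist W S0 m S1 * trans_prob W S1 S)"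
    by (simp add: Suc sum_distrib_right)
  also have "\<dots> = (\<Sum>S0\<in>UNIV. \<Sum>S1\<in>UNIV. config_dist W C n S0 * config_dist W S0 m S1 * trans_prob W S1 S)"
    by (rule sum.swap)
  also have "\<dots> = (\<Sum>S0\<in>UNIV. config_dist W C n S0 * config_dist W S0 (Suc m) S)"
    by (simp add: sum_distrib_left mult.assoc)
  finally show ?case .
qed

lemma cd_one: "config_dist W C (Suc 0) S = trans_prob W C S"
  by (simp add: ind_mult)

lemma cd_UNIV: "weight_matrix W \<Longrightarrow> config_dist W UNIV m S = (if S = UNIV then 1 else 0)"
  by (induction m arbitrary: S) (simp_all add: ind_mult T_UNIV)

lemma cd_empty: "weight_matrix W \<Longrightarrow> config_dist W {} m S = (if S = {} then 1 else 0)"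
  by (induction m arbitrary: S) (simp_all add: ind_mult T_empty)

lemma crossing:
  assumes "(a, b) \<in> r\<^sup>*" "a \<in> S" "b \<notin> S"
  shows "\<exists>x y. (x, y) \<in> r \<and> x \<in> S \<and> y \<notin> S"
  using assms by (induction rule: rtrancl_induct) auto

lemma cd_pos:
  fixes W :: "'v::finite \<Rightarrow> 'v \<Rightarrow> real"
  assumes W: "weight_matrix W" and sc: "strongly_connected W"
  shows "S \<noteq> {} \<Longrightarrow> card (- S) \<le> k \<Longrightarrow> config_dist W S k UNIV > 0"
proof (induction k arbitrary: S)
  case 0
  then have "S = UNIV" by auto
  then show ?case using cd_UNIV[OF W] by simp
next
  case (Suc k)
  show ?case
  proof (cases "S = UNIV")
    case True then show ?thesis using cd_UNIV[OF W, of "Suc k" UNIV] by (simp del: config_dist.simps)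
  next
    case False
    then obtain a b where "a \<in> S" "b \<notin> S" using Suc.prems by auto
    moreover have "(a, b) \<in> (edges_of W)\<^sup>*" using sc by (simp add: strongly_connected_def)
    ultimately obtain i j where ij0: "(i, j) \<in> edges_of W" "i \<in> S" "j \<notin> S"
      using crossing[where a=a and b=b and r="edges_of W" and S=S] by blast
    then have ij: "W i j > 0" "i \<in> S" "j \<notin> S" by (auto simp: edges_of_def)
    have up: "bd_update S i j = insert j S" using ij by (simp add: bd_update_def)
    have "card (- insert j S) < card (- S)"
      using ij by (intro psubset_card_mono) auto
    then have "card (- insert j S) \<le> k" using Suc.prems by simp
    then have pos: "config_dist W (insert j S) k UNIV > 0" using Suc.IH by simp
    have tp: "trans_prob W S (insert j S) > 0"
    proof -
      have "card (UNIV :: 'v set) > 0" by (simp add: finite_UNIV_card_ge_0)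
      then have "W i j / real (card (UNIV :: 'v set)) > 0" using ij by simp
      then show ?thesis using T_ge[OF W, where S=S and i=i and j=j] up by simp
    qed
    have eq: "config_dist W S (Suc k) UNIV = (\<Sum>S1\<in>UNIV. config_dist W S (Suc 0) S1 * config_dist W S1 k UNIV)"
      using cd_CK[of W S "Suc 0" k UNIV] by simp
    have "trans_prob W S (insert j S) * config_dist W (insert j S) k UNIV \<le> config_dist W S (Suc k) UNIV"
      unfolding eq cd_one
      by (rule member_le_sum[where f = "\<lambda>S1. trans_prob W S S1 * config_dist W S1 k UNIV"])
         (auto intro: mult_nonneg_nonneg T_nonneg[OF W] cd_nonneg[OF W])
    moreover have "trans_prob W S (insert j S) * config_dist W (insert j S) k UNIV > 0"
      using tp pos by simp
    ultimately show ?thesis by linarith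
  qed
qed



definition Tr :: "'v set set" where "Tr = {S. S \<noteq> {} \<and> S \<noteq> UNIV}"

definition q :: "('v::finite \<Rightarrow> 'v \<Rightarrow> real) \<Rightarrow> 'v set \<Rightarrow> nat \<Rightarrow> real" where
  "q W C n = (\<Sum>S\<in>Tr. config_dist W C n S)"

lemma q_nonneg: "weight_matrix W \<Longrightarrow> q W C n \<ge> 0"
  unfolding q_def by (intro sum_nonneg cd_nonneg)

lemma q_le1: "weight_matrix W \<Longrightarrow> q W C n \<le> 1"
proof -
  assume W: "weight_matrix W"
  have "q W C n \<le> (\<Sum>S\<in>UNIV. config_dist W C n S)"
    unfolding q_def by (rule sum_mono2) (auto intro: cd_nonneg[OF W])
  then show ?thesis using cd_sum[OF W] by simp
qed

lemma q_le_notU: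
  assumes W: "weight_matrix W" shows "q W C n \<le> 1 - config_dist W C n UNIV"
proof -
  have "q W C n \<le> (\<Sum>S\<in>UNIV - {UNIV}. config_dist W C n S)"
    unfolding q_def by (rule sum_mono2) (auto simp: Tr_def intro: cd_nonneg[OF W])
  moreover have "(\<Sum>S\<in>UNIV. config_dist W C n S) = config_dist W C n UNIV + (\<Sum>S\<in>UNIV - {UNIV}. config_dist W C n S)"
    by (rule sum.remove) auto
  ultimately show ?thesis using cd_sum[OF W, of C n] by simp
qed

lemma q_absorb:
  assumes W: "weight_matrix W" and "S0 \<notin> Tr" shows "q W S0 m = 0"
proof -
  have "S0 = {} \<or> S0 = UNIV" using assms(2) by (auto simp: Tr_def)
  have "config_dist W S0 m S = 0" if "S \<in> Tr" for S
  proof -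
    have "S \<noteq> {}" "S \<noteq> UNIV" using that by (simp_all add: Tr_def)
    with \<open>S0 = {} \<or> S0 = UNIV\<close> show ?thesis
      by (elim disjE) (simp_all add: cd_UNIV[OF W] cd_empty[OF W])
  qed
  then show ?thesis unfolding q_def by simp
qed

lemma q_step:
  fixes W :: "'v::finite \<Rightarrow> 'v \<Rightarrow> real"
  assumes W: "weight_matrix W" and sc: "strongly_connected W"
  obtains \<sigma> where "0 < \<sigma>" "\<sigma> < 1"
    "\<And>C n. q W C (n + card (UNIV :: 'v set)) \<le> \<sigma> * q W C n"
proof -
  define N where "N = card (UNIV :: 'v set)"
  define \<delta> where "\<delta> = Min (insert 1 ((\<lambda>S. config_dist W S N UNIV) ` Tr))"
  have fin: "finite (insert 1 ((\<lambda>S. config_dist W S N UNIV) ` (Tr :: 'v set set)))" by simp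
  have cN: "\<And>S::'v set. card (- S) \<le> N"
    unfolding N_def by (rule card_mono) auto
  have dpos: "\<delta> > 0" unfolding \<delta>_def
    using fin cd_pos[OF W sc _ cN] by (auto simp: Min_gr_iff Tr_def)
  have dle: "\<delta> \<le> config_dist W S N UNIV" if "S \<in> Tr" for S
    unfolding \<delta>_def using fin that by (intro Min_le) auto
  define \<sigma> where "\<sigma> = max (1 - \<delta>) (1/2)"
  have s0: "0 < \<sigma>" and s1: "\<sigma> < 1" using dpos by (auto simp: \<sigma>_def)
  have qS: "q W S0 N \<le> \<sigma>" if "S0 \<in> Tr" for S0
    using q_le_notU[OF W, of S0 N] dle[OF that] by (simp add: \<sigma>_def)
  have main: "q W C (n + N) \<le> \<sigma> * q W C n" for C n
  proof -
    have "q W C (n + N) = (\<Sum>S\<in>Tr. \<Sum>S0\<in>UNIV. config_dist W C n S0 * config_dist W S0 N S)"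
      unfolding q_def by (simp add: cd_CK)
    also have "\<dots> = (\<Sum>S0\<in>UNIV. config_dist W C n S0 * q W S0 N)"
      unfolding q_def by (simp add: sum.swap[of _ Tr] sum_distrib_left)
    also have "\<dots> \<le> (\<Sum>S0\<in>UNIV. if S0 \<in> Tr then \<sigma> * config_dist W C n S0 else 0)"
    proof (rule sum_mono)
      fix S0 :: "'v set"
      show "config_dist W C n S0 * q W S0 N \<le> (if S0 \<in> Tr then \<sigma> * config_dist W C n S0 else 0)"
      proof (cases "S0 \<in> Tr")
        case True
        then show ?thesis using qS[OF True] cd_nonneg[OF W, of C n S0]
          by (metis mult.commute mult_right_mono)
      next
        case False then show ?thesis using q_absorb[OF W False] by simp
      qed
    qed
    also have "\<dots> = \<sigma> * q W C n"
      unfolding q_def using sum.inter_restrict[of UNIV "\<lambda>S0. \<sigma> * config_dist W C n S0" Tr]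
      by (simp add: sum_distrib_left)
    finally show ?thesis .
  qed
  show ?thesis using that s0 s1 main unfolding N_def by blast
qed

lemma q_geom:
  fixes W :: "'v::finite \<Rightarrow> 'v \<Rightarrow> real"
  assumes W: "weight_matrix W" and sc: "strongly_connected W"
  obtains K \<rho> where "0 \<le> \<rho>" "\<rho> < 1" "K \<ge> 0" "\<And>C n. q W C n \<le> K * \<rho> ^ n"
proof -
  define N where "N = card (UNIV :: 'v set)"
  have N0: "N > 0" unfolding N_def by (simp add: finite_UNIV_card_ge_0)
  obtain \<sigma> where s0: "0 < \<sigma>" and s1: "\<sigma> < 1" and st: "\<And>C n. q W C (n + N) \<le> \<sigma> * q W C n"
    using q_step[OF W sc] unfolding N_def by blast
  have pk: "q W C (k * N + r) \<le> \<sigma> ^ k" for C k r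
  proof (induction k)
    case 0 then show ?case using q_le1[OF W] by simp
  next
    case (Suc k)
    have "q W C (Suc k * N + r) = q W C ((k * N + r) + N)" by (simp add: algebra_simps)
    also have "\<dots> \<le> \<sigma> * q W C (k * N + r)" by (rule st)
    also have "\<dots> \<le> \<sigma> * \<sigma> ^ k" using Suc s0 by (intro mult_left_mono) auto
    finally show ?case by simp
  qed
  define \<rho> where "\<rho> = root N \<sigma>"
  have r0: "0 < \<rho>" and r1: "\<rho> < 1" using N0 s0 s1 by (auto simp: \<rho>_def real_root_lt_1_iff)
  have rN: "\<rho> ^ N = \<sigma>" using N0 s0 by (simp add: \<rho>_def real_root_pow_pos)
  have bound: "q W C n \<le> (1 / \<sigma>) * \<rho> ^ n" for C n
  proof -
    have "n = (n div N) * N + n mod N" by simp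
    then have "q W C n \<le> \<sigma> ^ (n div N)" using pk by metis
    also have "\<sigma> ^ (n div N) = \<rho> ^ (N * (n div N))" by (simp add: power_mult rN)
    also have "\<dots> \<le> \<rho> ^ n / \<sigma>"
    proof -
      have "\<rho> ^ N \<le> \<rho> ^ (n mod N)"
        using r0 r1 N0 by (intro power_decreasing) auto
      then have "\<rho> ^ (N * (n div N)) * \<sigma> \<le> \<rho> ^ (N * (n div N)) * \<rho> ^ (n mod N)"
        using r0 rN by (intro mult_left_mono) auto
      also have "\<dots> = \<rho> ^ n" by (simp add: power_add[symmetric])
      finally show ?thesis using s0 by (simp add: field_simps)
    qed
    finally show ?thesis by simp
  qed
  show ?thesis using that[of \<rho> "1/\<sigma>"] r0 r1 s0 bound by auto
qed



lemma F_diff: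
  assumes W: "weight_matrix W"
  shows "fix_by W C (Suc n) - fix_by W C n = (\<Sum>S0\<in>Tr. config_dist W C n S0 * trans_prob W S0 UNIV)"
proof -
  have F: "fix_by W C n = (\<Sum>S0\<in>UNIV. if S0 = UNIV then config_dist W C n S0 else 0)"
    by (simp add: fix_by_def)
  have "fix_by W C (Suc n) - fix_by W C n
     = (\<Sum>S0\<in>UNIV. config_dist W C n S0 * trans_prob W S0 UNIV - (if S0 = UNIV then config_dist W C n S0 else 0))"
    by (subst F) (simp add: fix_by_def sum_subtractf)
  also have "\<dots> = (\<Sum>S0\<in>UNIV. if S0 \<in> Tr then config_dist W C n S0 * trans_prob W S0 UNIV else 0)"
  proof (rule sum.cong[OF refl])
    fix S0 :: "'a set"
    show "config_dist W C n S0 * trans_prob W S0 UNIV - (if S0 = UNIV then config_dist W C n S0 else 0)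
      = (if S0 \<in> Tr then config_dist W C n S0 * trans_prob W S0 UNIV else 0)"
      by (cases "S0 = UNIV"; cases "S0 = {}") (auto simp: Tr_def T_UNIV[OF W] T_empty[OF W])
  qed
  also have "\<dots> = (\<Sum>S0\<in>Tr. config_dist W C n S0 * trans_prob W S0 UNIV)"
    using sum.inter_restrict[of UNIV "\<lambda>S0. config_dist W C n S0 * trans_prob W S0 UNIV" Tr] by simp
  finally show ?thesis .
qed

lemma F_diff_bounds:
  assumes W: "weight_matrix W"
  shows "0 \<le> fix_by W C (Suc n) - fix_by W C n" "fix_by W C (Suc n) - fix_by W C n \<le> q W C n"
proof -
  show "0 \<le> fix_by W C (Suc n) - fix_by W C n" unfolding F_diff[OF W]
    by (intro sum_nonneg mult_nonneg_nonneg cd_nonneg[OF W] T_nonneg[OF W])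
  show "fix_by W C (Suc n) - fix_by W C n \<le> q W C n" unfolding F_diff[OF W] q_def
    by (intro sum_mono) (metis cd_nonneg[OF W] T_le1[OF W] mult_left_le)
qed

lemma P_bounds:
  assumes W: "weight_matrix W"
  shows "fix_by W C n \<le> mutant_prob W C i n" "mutant_prob W C i n \<le> fix_by W C n + q W C n"
proof -
  show "fix_by W C n \<le> mutant_prob W C i n"
    unfolding mutant_prob_def fix_by_def
    using member_le_sum[of UNIV UNIV "\<lambda>S. if i \<in> S then config_dist W C n S else 0"]
    by (simp add: cd_nonneg[OF W])
  have "mutant_prob W C i n \<le> (\<Sum>S\<in>UNIV. (if S = UNIV then config_dist W C n S else 0) + (if S \<in> Tr then config_dist W C n S else 0))"
    unfolding mutant_prob_def
    by (intro sum_mono) (auto simp: Tr_def cd_nonneg[OF W])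
  also have "\<dots> = fix_by W C n + q W C n"
    unfolding q_def fix_by_def sum.distrib
    using sum.inter_restrict[of UNIV "\<lambda>S. config_dist W C n S" Tr] by simp
  finally show "mutant_prob W C i n \<le> fix_by W C n + q W C n" .
qed

lemma min_bounds:
  assumes W: "weight_matrix W"
  shows "fix_by W C n \<le> min_mutant_prob W C n" "min_mutant_prob W C n \<le> fix_by W C n + q W C n"
proof -
  show "fix_by W C n \<le> min_mutant_prob W C n"
    unfolding min_mutant_prob_def using P_bounds(1)[OF W] by (simp add: Min_ge_iff)
  have "min_mutant_prob W C n \<le> mutant_prob W C undefined n"
    unfolding min_mutant_prob_def by (rule Min_le) auto
  then show "min_mutant_prob W C n \<le> fix_by W C n + q W C n" using P_bounds(2)[OF W] by (meson order_trans)
qed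



theorem theorem7:
  fixes W :: "'v::finite \<Rightarrow> 'v \<Rightarrow> real" and C :: "'v set"
  assumes "weight_matrix W"
    and "strongly_connected W"
    and "fix_prob W C > 0"
  shows "summable (\<lambda>n. real (Suc n) * (min_mutant_prob W C (Suc n) - min_mutant_prob W C n)) \<and>
         summable (\<lambda>n. real (Suc n) * (fix_by W C (Suc n) - fix_by W C n)) \<and>
         (1 / fix_prob W C) *
           (\<Sum>n. real (Suc n) * (min_mutant_prob W C (Suc n) - min_mutant_prob W C n))
         \<le> (1 / fix_prob W C) *
           (\<Sum>n. real (Suc n) * (fix_by W C (Suc n) - fix_by W C n)) \<and>
         (1 / fix_prob W C) *
           (\<Sum>n. real (Suc n) * (fix_by W C (Suc n) - fix_by W C n)) = fix_time W C"
proof -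
  note W = assms(1)
  obtain K \<rho> where r0: "0 \<le> \<rho>" and r1: "\<rho> < 1" and K0: "K \<ge> 0"
    and qb: "\<And>n. q W C n \<le> K * \<rho> ^ n"
    using q_geom[OF assms(1,2)] by metis
  define F where "F = fix_by W C"
  define a where "a = min_mutant_prob W C"
  define d where "d = (\<lambda>n. a n - F n)"
  define e where "e = (\<lambda>n. real (Suc n) * (F (Suc n) - F n))"
  define h where "h = (\<lambda>n. real (Suc n) * (d (Suc n) - d n))"
  define g where "g = (\<lambda>n. real (Suc n) * (a (Suc n) - a n))"
  have sp: "summable (\<lambda>n. real (Suc n) * \<rho> ^ n)" by (rule summable_n_pow[OF r0 r1])
  have d0: "0 \<le> d n" and d1: "d n \<le> K * \<rho> ^ n" for n
    using min_bounds[OF W, of C n] qb[of n] by (auto simp: d_def a_def F_def)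
  have se: "summable e"
  proof (rule summable_comparison_test[OF _ summable_mult[OF sp, of K]])
    show "\<exists>N. \<forall>n\<ge>N. norm (e n) \<le> K * (real (Suc n) * \<rho> ^ n)"
    proof (intro exI allI impI)
      fix n
      have "0 \<le> F (Suc n) - F n" "F (Suc n) - F n \<le> K * \<rho> ^ n"
        using F_diff_bounds[OF W, of C n] qb[of n] by (auto simp: F_def)
      then show "norm (e n) \<le> K * (real (Suc n) * \<rho> ^ n)"
        unfolding e_def by (simp add: abs_mult mult_left_mono)
    qed
  qed
  have sh: "summable h"
  proof (rule summable_comparison_test[OF _ summable_mult[OF sp, of "2 * K"]])
    show "\<exists>N. \<forall>n\<ge>N. norm (h n) \<le> 2 * K * (real (Suc n) * \<rho> ^ n)"
    proof (intro exI allI impI)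
      fix n
      have "K * \<rho> ^ Suc n \<le> K * \<rho> ^ n" using K0 r0 r1
        by (intro mult_left_mono power_decreasing) auto
      then have "\<bar>d (Suc n) - d n\<bar> \<le> 2 * K * \<rho> ^ n"
        using d0[of n] d1[of n] d0[of "Suc n"] d1[of "Suc n"] by linarith
      then show "norm (h n) \<le> 2 * K * (real (Suc n) * \<rho> ^ n)"
        unfolding h_def by (simp add: abs_mult mult_left_mono mult.left_commute)
    qed
  qed
  have geh: "g = (\<lambda>n. e n + h n)"
    by (rule ext) (simp add: g_def e_def h_def d_def algebra_simps)
  have sg: "summable g" unfolding geh using se sh by (rule summable_add)
  have partial: "(\<Sum>n<M. h n) = real M * d M - (\<Sum>n<M. d n)" for M
    by (induction M) (simp_all add: h_def algebra_simps)
  have hle: "suminf h \<le> 0"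
  proof -
    have l1: "(\<lambda>M. \<Sum>n<M. h n) \<longlonglongrightarrow> suminf h" by (rule summable_LIMSEQ[OF sh])
    have l2: "(\<lambda>M. K * (real (Suc M) * \<rho> ^ M)) \<longlonglongrightarrow> 0"
      using summable_LIMSEQ_zero[OF summable_mult[OF sp, of K]] by simp
    have "(\<Sum>n<M. h n) \<le> K * (real (Suc M) * \<rho> ^ M)" for M
    proof -
      have "(\<Sum>n<M. d n) \<ge> 0" by (intro sum_nonneg d0)
      moreover have "real M * d M \<le> real (Suc M) * (K * \<rho> ^ M)"
        using d0[of M] d1[of M] by (intro mult_mono) auto
      ultimately show ?thesis unfolding partial by (simp add: mult.left_commute)
    qed
    then show ?thesis using LIMSEQ_le[OF l1 l2] by blast
  qed
  have "suminf g = suminf e + suminf h" unfolding geh by (rule suminf_add[OF se sh, symmetric])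
  then have "suminf g \<le> suminf e" using hle by simp
  then have ineq: "(1 / fix_prob W C) * suminf g \<le> (1 / fix_prob W C) * suminf e"
    using assms(3) by (intro mult_left_mono) auto
  show ?thesis
    using sg se ineq unfolding g_def e_def a_def F_def by (simp add: fix_time_def)
qed

end
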